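(* For all positive integers $k,t_1,\dots,t_k$ and all real $b,c>1$, $$\prod_{j=1}^k\left(\sum_{p_j=1}^{t_j}\binom{t_j-1}{p_j-1}b^{t_j-p_j}(ct_j)^{cp_j}\right)\le\big(c(t_1+\cdots+t_k)+b\big)^{c(t_1+\cdots+t_k)}.$$ *)

theory Defs
  imports Complex_Main
begin

end

theory Submission
  imports Defs
begin

lemma superadd:
  fixes x b c :: real
  assumes "x \<ge> 0" "b \<ge> 0" "c \<ge> 1" "x + b > 0"
  shows "x powr c + b powr c \<le> (x + b) powr c"
proof -
  define s where "s = x + b"
  have s: "s > 0" using assms s_def by simp
  have "(x/s) powr c \<le> (x/s) powr 1"
    by (rule powr_mono') (use assms s s_def in auto)
  hence 1: "x powr c / s powr c \<le> x / s" using assms s by (simp add: powr_divide)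
  have "(b/s) powr c \<le> (b/s) powr 1"
    by (rule powr_mono') (use assms s s_def in auto)
  hence 2: "b powr c / s powr c \<le> b / s" using assms s by (simp add: powr_divide)
  have sp: "s powr c > 0" using s by simp
  have 3: "x powr c \<le> (x / s) * s powr c" using 1 sp by (simp add: divide_le_eq)
  have 4: "b powr c \<le> (b / s) * s powr c" using 2 sp by (simp add: divide_le_eq)
  have 5: "(x / s) * s powr c + (b / s) * s powr c = s powr c"
    using s s_def by (simp add: add_divide_distrib[symmetric] distrib_right[symmetric])
  have "x powr c + b powr c \<le> s powr c" using 3 4 5 by linarith
  thus ?thesis using s_def by simp
qed

lemma single:
  fixes b c :: real and t :: nat
  assumes "t \<ge> 1" "b > 1" "c > 1"
  shows "(\<Sum>p=1..t. real ((t - 1) choose (p - 1)) * b ^ (t - p)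
            * (c * real t) powr (c * real p)) \<le> (c * real t + b) powr (c * real t)"
proof -
  obtain n where tn: "t = Suc n" using assms(1) by (cases t) auto
  define X where "X = (c * real t) powr c"
  define Y where "Y = (c * real t + b) powr c"
  have ct: "c * real t > 0" using assms by simp
  have pw: "(c * real t) powr (c * real p) = X ^ p" for p
  proof -
    have Xp: "X > 0" unfolding X_def using ct assms tn by simp
    have "(c * real t) powr (c * real p) = X powr real p" by (simp add: X_def powr_powr)
    also have "\<dots> = X ^ p" using Xp by (rule powr_realpow)
    finally show ?thesis .
  qed
  have "(\<Sum>p=1..t. real ((t - 1) choose (p - 1)) * b ^ (t - p)
            * (c * real t) powr (c * real p))
      = (\<Sum>p=Suc 0..Suc n. real (n choose (p - 1)) * b ^ (Suc n - p) * X ^ p)"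
    using tn pw by simp
  also have "\<dots> = (\<Sum>q=0..n. real (n choose q) * b ^ (n - q) * X ^ Suc q)"
    by (subst sum.shift_bounds_cl_Suc_ivl) simp
  also have "\<dots> = X * (\<Sum>q\<le>n. real (n choose q) * X ^ q * b ^ (n - q))"
    by (simp add: sum_distrib_left atLeast0AtMost algebra_simps)
  also have "\<dots> = X * (X + b) ^ n" by (simp add: binomial_ring)
  also have "\<dots> \<le> Y * Y ^ n"
  proof (rule mult_mono)
    show "X \<le> Y" unfolding X_def Y_def
      by (rule powr_mono2) (use assms ct in auto)
    have "b \<le> b powr c"
      using assms powr_mono[of 1 c b] by simp
    hence "X + b \<le> X + b powr c" by simp
    also have "\<dots> \<le> Y" unfolding X_def Y_def
      by (rule superadd) (use assms ct in \<open>auto intro: add_pos_pos\<close>)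
    finally show "(X + b) ^ n \<le> Y ^ n"
      by (rule power_mono) (simp add: X_def add_nonneg_nonneg less_imp_le assms(2) order_less_trans[OF zero_less_one])
  qed (use assms in \<open>auto simp: Y_def X_def intro!: zero_le_power add_nonneg_nonneg\<close>)
  also have "\<dots> = Y ^ t" using tn by simp
  also have "\<dots> = (c * real t + b) powr (c * real t)"
    unfolding Y_def using ct assms by (subst powr_power) (linarith, simp add: mult.commute)
  finally show ?thesis .
qed

theorem lemma4p8:
  fixes k :: nat and t :: "nat \<Rightarrow> nat" and b c :: real
  assumes "k \<ge> 1"
    and "\<And>j. j \<in> {1..k} \<Longrightarrow> t j \<ge> 1"
    and "b > 1" and "c > 1"
  shows "(\<Prod>j=1..k. \<Sum>p=1..t j. real ((t j - 1) choose (p - 1)) * b ^ (t j - p)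
            * (c * real (t j)) powr (c * real p))
         \<le> (c * real (\<Sum>j=1..k. t j) + b) powr (c * real (\<Sum>j=1..k. t j))"
proof -
  define T where "T = (\<Sum>j=1..k. t j)"
  have "(\<Prod>j=1..k. \<Sum>p=1..t j. real ((t j - 1) choose (p - 1)) * b ^ (t j - p)
            * (c * real (t j)) powr (c * real p))
      \<le> (\<Prod>j=1..k. (c * real (t j) + b) powr (c * real (t j)))"
  proof (rule prod_mono, rule conjI)
    fix j assume j: "j \<in> {1..k}"
    show "0 \<le> (\<Sum>p=1..t j. real ((t j - 1) choose (p - 1)) * b ^ (t j - p)
            * (c * real (t j)) powr (c * real p))"
      using assms by (intro sum_nonneg mult_nonneg_nonneg) auto
    show "(\<Sum>p=1..t j. real ((t j - 1) choose (p - 1)) * b ^ (t j - p)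
            * (c * real (t j)) powr (c * real p)) \<le> (c * real (t j) + b) powr (c * real (t j))"
      using single[of "t j" b c] assms j by auto
  qed
  also have "\<dots> \<le> (\<Prod>j=1..k. (c * real T + b) powr (c * real (t j)))"
  proof (rule prod_mono, rule conjI)
    fix j assume j: "j \<in> {1..k}"
    have "t j \<le> T" unfolding T_def using j by (intro member_le_sum) auto
    hence "c * real (t j) + b \<le> c * real T + b" using assms by simp
    thus "(c * real (t j) + b) powr (c * real (t j)) \<le> (c * real T + b) powr (c * real (t j))"
      using assms by (intro powr_mono2) auto
  qed simp
  also have "\<dots> = (c * real T + b) powr (\<Sum>j=1..k. c * real (t j))"
  proof -
    have "0 \<le> c * real T" using assms by simp
    hence "c * real T + b \<noteq> 0" using assms by linarith
    thus ?thesis by (subst powr_sum) auto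
  qed
  also have "\<dots> = (c * real T + b) powr (c * real T)"
    unfolding T_def by (simp add: sum_distrib_left)
  finally show ?thesis unfolding T_def .
qed

end
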